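(* Let $T$ be a Fano tetrahedron in $\mathbb{Z}^3$ with vertices $x_1=(1,0,0)$, $x_2=(0,1,0)$, $x_3=(k''\lambda_4-a\lambda_1,\ k'\lambda_4-a\lambda_2,\ k\lambda_4)$, $x_4=(-k''\lambda_3-b\lambda_1,\ -k'\lambda_3-b\lambda_2,\ -k\lambda_3)$, where $\lambda_1\le\cdots\le\lambda_4$ are non-negative integers with $\gcd(\lambda_1,\ldots,\lambda_4)=1$ and $\sum_i\lambda_ix_i=0$, $a,b\in\mathbb{Z}$ with $a>0$ and $a\lambda_3+b\lambda_4=1$, and $k,k',k''\in\mathbb{N}$ with $0\le k''\lambda_4-a\lambda_1<k\lambda_4$ and $0\le k'\lambda_4-a\lambda_2<k\lambda_4$. Then $$0\le k\lambda_3-k''\lambda_3-b\lambda_1<k\lambda_3\quad\text{and}\quad 0\le k\lambda_3-k'\lambda_3-b\lambda_2<k\lambda_3,$$ and one of these lower inequalities is an equality only if $\lambda_3=1$; in that case $T$ is equivalent under $GL(3,\mathbb{Z})$ either to the tetrahedron with vertices $e_1,e_2,e_3,-e_1-e_2-e_3$ or to the tetrahedron with vertices $(1,0,0),(0,1,0),(1,1,2),(-1,-1,-1)$.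
   Context: A tetrahedron is called Fano if its vertices lie in $\mathbb{Z}^3$ and the only lattice point it contains other than its vertices is the origin, which lies strictly in its interior. $e_1,e_2,e_3$ is the standard basis of $\mathbb{Z}^3$. *)

theory Defs
  imports "HOL-Analysis.Analysis"
begin

definition ipt :: "int \<Rightarrow> int \<Rightarrow> int \<Rightarrow> real^3" where
  "ipt a b c = vector [real_of_int a, real_of_int b, real_of_int c]"

definition lattice_point :: "real^3 \<Rightarrow> bool" where
  "lattice_point x \<longleftrightarrow> (\<forall>i. x $ i \<in> \<int>)"

definition fano_tetrahedron :: "real^3 \<Rightarrow> real^3 \<Rightarrow> real^3 \<Rightarrow> real^3 \<Rightarrow> bool" where
  "fano_tetrahedron v1 v2 v3 v4 \<longleftrightarrow>
     lattice_point v1 \<and> lattice_point v2 \<and> lattice_point v3 \<and> lattice_point v4 \<and>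
     card {v1, v2, v3, v4} = 4 \<and> \<not> affine_dependent {v1, v2, v3, v4} \<and>
     0 \<in> interior (convex hull {v1, v2, v3, v4}) \<and>
     {x \<in> convex hull {v1, v2, v3, v4}. lattice_point x} = {v1, v2, v3, v4, 0}"

definition GL3Z_equiv :: "(real^3) set \<Rightarrow> (real^3) set \<Rightarrow> bool" where
  "GL3Z_equiv S S' \<longleftrightarrow>
     (\<exists>A :: real^3^3. (\<forall>i j. A $ i $ j \<in> \<int>) \<and> \<bar>det A\<bar> = 1 \<and> (\<lambda>x. A *v x) ` S = S')"

end

theory Submission
  imports Defs
begin

lemma ipt_comp [simp]: "ipt a b c $ 1 = of_int a" "ipt a b c $ 2 = of_int b" "ipt a b c $ 3 = of_int c"
  by (simp_all add: ipt_def)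

lemma ipt_eq_iff: "ipt a b c = ipt d e f \<longleftrightarrow> a = d \<and> b = e \<and> c = f"
  by (simp add: ipt_def vec_eq_iff forall_3)

lemma vec3_eq: "(v::real^3) = w \<longleftrightarrow> v$1 = w$1 \<and> v$2 = w$2 \<and> v$3 = w$3"
  by (simp add: vec_eq_iff forall_3)

lemma ipt_inner: "ipt a b c \<bullet> ipt d e f = of_int (a*d + b*e + c*f)"
  by (simp add: ipt_def inner_vec_def sum_3)

lemma ipt_lattice: "lattice_point (ipt a b c)"
  by (simp add: lattice_point_def forall_3)

lemma ipt_zero: "(0::real^3) = ipt 0 0 0"
  by (simp add: vec3_eq)

lemma no_interior:
  assumes "0 \<in> interior S" "S \<subseteq> {x. 0 \<le> c \<bullet> x}"
  shows "c = 0"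
proof (rule ccontr)
  assume "c \<noteq> 0"
  have "interior S \<subseteq> interior {x. 0 \<le> c \<bullet> x}" using assms(2) by (rule interior_mono)
  also have "\<dots> = {x. 0 < c \<bullet> x}" using \<open>c \<noteq> 0\<close> by (rule interior_halfspace_ge)
  finally show False using assms(1) by auto
qed

lemma hull_half:
  assumes "0 \<le> c \<bullet> v1" "0 \<le> c \<bullet> v2" "0 \<le> c \<bullet> v3" "0 \<le> c \<bullet> v4"
  shows "convex hull {v1,v2,v3,v4} \<subseteq> {x. 0 \<le> c \<bullet> x}"
  by (rule hull_minimal) (use assms convex_halfspace_ge in auto)

lemma seg_point:
  fixes H :: "(real^3) set"
  assumes "convex H" "0 \<in> H" "u \<in> H" "v \<in> H" "0 \<le> \<beta>" "0 \<le> \<gamma>" "\<beta> + \<gamma> \<le> 1"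
  shows "\<beta> *\<^sub>R u + \<gamma> *\<^sub>R v \<in> H"
proof -
  have "convex hull {0, u, v} \<subseteq> H" using assms by (intro hull_minimal) auto
  moreover have "\<beta> *\<^sub>R u + \<gamma> *\<^sub>R v \<in> convex hull {0, u, v}"
    unfolding convex_hull_3
    by (rule CollectI, rule exI[of _ "1 - \<beta> - \<gamma>"], rule exI[of _ \<beta>], rule exI[of _ \<gamma>]) (use assms in auto)
  ultimately show ?thesis by blast
qed

lemma gl_refl: "GL3Z_equiv S S"
  unfolding GL3Z_equiv_def
proof (rule exI[of _ "mat 1"], intro conjI)
  show "\<forall>i j. (mat 1 :: real^3^3) $ i $ j \<in> \<int>" by (simp add: mat_def)
qed (auto simp: det_I)


theorem proposition3p5:
  fixes l1 l2 l3 l4 a b k k' k'' :: int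
  assumes "0 \<le> l1" "l1 \<le> l2" "l2 \<le> l3" "l3 \<le> l4"
    and "gcd l1 (gcd l2 (gcd l3 l4)) = 1"
    and "0 \<le> k" "0 \<le> k'" "0 \<le> k''"
    and "a > 0" "a * l3 + b * l4 = 1"
    and "0 \<le> k'' * l4 - a * l1" "k'' * l4 - a * l1 < k * l4"
    and "0 \<le> k' * l4 - a * l2" "k' * l4 - a * l2 < k * l4"
    and "real_of_int l1 *\<^sub>R ipt 1 0 0 + real_of_int l2 *\<^sub>R ipt 0 1 0
         + real_of_int l3 *\<^sub>R ipt (k'' * l4 - a * l1) (k' * l4 - a * l2) (k * l4)
         + real_of_int l4 *\<^sub>R ipt (- k'' * l3 - b * l1) (- k' * l3 - b * l2) (- k * l3) = 0"
    and "fano_tetrahedron (ipt 1 0 0) (ipt 0 1 0)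
           (ipt (k'' * l4 - a * l1) (k' * l4 - a * l2) (k * l4))
           (ipt (- k'' * l3 - b * l1) (- k' * l3 - b * l2) (- k * l3))"
  shows "0 \<le> k * l3 - k'' * l3 - b * l1 \<and> k * l3 - k'' * l3 - b * l1 < k * l3
       \<and> 0 \<le> k * l3 - k' * l3 - b * l2 \<and> k * l3 - k' * l3 - b * l2 < k * l3
       \<and> ((k * l3 - k'' * l3 - b * l1 = 0 \<or> k * l3 - k' * l3 - b * l2 = 0) \<longrightarrow>
            l3 = 1 \<and>
            (GL3Z_equiv
               (convex hull {ipt 1 0 0, ipt 0 1 0,
                  ipt (k'' * l4 - a * l1) (k' * l4 - a * l2) (k * l4),
                  ipt (- k'' * l3 - b * l1) (- k' * l3 - b * l2) (- k * l3)})
               (convex hull {ipt 1 0 0, ipt 0 1 0, ipt 0 0 1, ipt (-1) (-1) (-1)})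
             \<or> GL3Z_equiv
               (convex hull {ipt 1 0 0, ipt 0 1 0,
                  ipt (k'' * l4 - a * l1) (k' * l4 - a * l2) (k * l4),
                  ipt (- k'' * l3 - b * l1) (- k' * l3 - b * l2) (- k * l3)})
               (convex hull {ipt 1 0 0, ipt 0 1 0, ipt 1 1 2, ipt (-1) (-1) (-1)})))"
proof -
  define E1 where "E1 = ipt 1 0 0"
  define E2 where "E2 = ipt 0 1 0"
  define p1 where "p1 = k''*l4 - a*l1"
  define p2 where "p2 = k'*l4 - a*l2"
  define r1 where "r1 = - k''*l3 - b*l1"
  define r2 where "r2 = - k'*l3 - b*l2"
  define q1 where "q1 = k * l3 - k'' * l3 - b * l1"
  define q2 where "q2 = k * l3 - k' * l3 - b * l2"
  define X where "X = ipt p1 p2 (k*l4)"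
  define Y where "Y = ipt r1 r2 (- k*l3)"
  define H where "H = convex hull {E1, E2, X, Y}"
  have fano: "0 \<in> interior H" "{x\<in>H. lattice_point x} = {E1, E2, X, Y, 0}"
    using assms(16) unfolding fano_tetrahedron_def H_def X_def Y_def E1_def E2_def
      p1_def p2_def r1_def r2_def by auto
  have H0: "0 \<in> H" using fano(2) by blast
  have Hlat: "y \<in> {E1,E2,X,Y,0}" if "y \<in> H" "lattice_point y" for y using fano(2) that by blast
  have Hc: "convex H" unfolding H_def by (rule convex_convex_hull)
  have HE: "E1 \<in> H" "E2 \<in> H" "X \<in> H" "Y \<in> H" unfolding H_def by (auto intro: hull_inc)
  have p1b: "0 \<le> p1" "p1 < k*l4" "0 \<le> p2" "p2 < k*l4"
    using assms(11-14) unfolding p1_def p2_def by auto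
  have kl4: "0 < k*l4" using p1b by linarith
  have kl4r: "0 < real_of_int k * real_of_int l4" using kl4 by (metis of_int_0_less_iff of_int_mult)
  have l4pos: "0 < l4" and kpos: "0 < k" using kl4 assms(1-4,6) by (auto simp: zero_less_mult_iff)
  have id1: "l4 * (-r1) = l3*p1 + l1" unfolding r1_def p1_def using assms(10) by algebra
  have id2: "l4 * (-r2) = l3*p2 + l2" unfolding r2_def p2_def using assms(10) by algebra
  have l3pos: "0 < l3"
  proof (rule ccontr)
    assume "\<not> 0 < l3" then have "l3 = 0" using assms(1-3) by linarith
    have "H \<subseteq> {x. 0 \<le> ipt 0 0 1 \<bullet> x}" unfolding H_def E1_def E2_def X_def Y_def
      by (rule hull_half) (use kl4r \<open>l3 = 0\<close> in \<open>simp_all add: ipt_inner\<close>)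
    from no_interior[OF fano(1) this] show False by (simp add: ipt_zero ipt_eq_iff)
  qed
  have l1pos: "0 < l1"
  proof (rule ccontr)
    assume "\<not> 0 < l1" then have "l1 = 0" using assms(1) by linarith
    have e: "l3*p1 + r1*l4 = 0" using id1 \<open>l1 = 0\<close> by (simp add: algebra_simps)
    have e2: "k*l3*p1 + r1*(k*l4) = k*(l3*p1 + r1*l4)" by (simp add: algebra_simps)
    have "H \<subseteq> {x. 0 \<le> ipt (k*l3) 0 r1 \<bullet> x}" unfolding H_def E1_def E2_def X_def Y_def
      by (rule hull_half) (use kpos l3pos e e2 in \<open>simp_all add: ipt_inner algebra_simps\<close>)
    from no_interior[OF fano(1) this] show False using kpos l3pos by (simp add: ipt_zero ipt_eq_iff)
  qed
  have q1r: "q1 = k*l3 + r1" unfolding q1_def r1_def by simp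
  have q2r: "q2 = k*l3 + r2" unfolding q2_def r2_def by simp
  have lam: "l4*(k*l3) = l3*(k*l4)" by (simp add: algebra_simps)
  have e1: "l3*(k*l4 - 1) = l4*(k*l3) - l3" by (simp add: algebra_simps)
  have m1a: "l3*p1 \<le> l3*(k*l4 - 1)" by (rule mult_left_mono) (use p1b l3pos in auto)
  have m2a: "l3*p2 \<le> l3*(k*l4 - 1)" by (rule mult_left_mono) (use p1b l3pos in auto)
  have "0 \<le> l3 * p1" "0 \<le> l3 * p2" using p1b l3pos by auto
  then have "0 < l4 * (-r1)" "0 < l4 * (-r2)" using id1 id2 l1pos assms(2) by linarith+
  then have r1neg: "r1 < 0" and r2neg: "r2 < 0" using l4pos by (auto simp: mult_less_0_iff)
  have "l4*(-r1) \<le> l4*(k*l3)" using id1 m1a e1 assms(2,3) by linarith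
  then have r1b: "-r1 \<le> k*l3" using l4pos by (rule mult_left_le_imp_le)
  have "l4*(-r2) \<le> l4*(k*l3)" using id2 m2a e1 assms(2,3) by linarith
  then have r2b: "-r2 \<le> k*l3" using l4pos by (rule mult_left_le_imp_le)
  define n where "n = k*l3"
  have npos: "0 < n" unfolding n_def using kpos l3pos by simp
  have ineqs: "0 \<le> q1 \<and> q1 < k*l3 \<and> 0 \<le> q2 \<and> q2 < k*l3"
    using q1r q2r r1neg r2neg r1b r2b by linarith
  have nr: "real_of_int n = real_of_int k * real_of_int l3" unfolding n_def by simp
  have nrpos: "0 < real_of_int n" using npos by simp
  have eqcase: "l3 = 1 \<and> (GL3Z_equiv H (convex hull {ipt 1 0 0, ipt 0 1 0, ipt 0 0 1, ipt (-1) (-1) (-1)})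
     \<or> GL3Z_equiv H (convex hull {ipt 1 0 0, ipt 0 1 0, ipt 1 1 2, ipt (-1) (-1) (-1)}))"
    if qq: "q1 = 0 \<or> q2 = 0"
  proof -
    have bad: "False" if "z \<in> H" "lattice_point z" "z $ 3 = -1" "2 \<le> n" for z
    proof -
      have "z \<in> {E1,E2,X,Y,0}" using Hlat that by blast
      moreover have "E1$3 = 0" "E2$3 = 0" "X$3 > 0" "Y$3 = - real_of_int n"
        using kl4r nr unfolding E1_def E2_def X_def Y_def by auto
      moreover have "2 \<le> real_of_int n" using that(4) by linarith
      ultimately show False using that(3) by auto
    qed
    have "n = 1"
    proof (rule ccontr)
      assume "n \<noteq> 1"
      then have n2: "2 \<le> n" using npos by linarith
      from qq consider "q1 = 0" | "q2 = 0" by blast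
      then show False
      proof cases
        case 1
        then have rn: "r1 = -n" using q1r n_def by simp
        define d where "d = (-r2) div n"
        define m where "m = (-r2) mod n"
        have dm: "d*n + m = -r2" unfolding d_def m_def by simp
        have m: "0 \<le> m" "m + 1 \<le> n" using npos by (simp_all add: m_def pos_mod_bound[of n "-r2"] add1_zle_eq)
        have mr: "real_of_int m + 1 \<le> real_of_int n" "0 \<le> real_of_int m" using m by linarith+
        have dmr: "real_of_int d * real_of_int n + real_of_int m = - real_of_int r2"
          using arg_cong[OF dm, of real_of_int] by simp
        define z where "z = (real_of_int m / real_of_int n) *\<^sub>R E2 + (1 / real_of_int n) *\<^sub>R Y"
        have zH: "z \<in> H" unfolding z_def
          by (rule seg_point[OF Hc H0 HE(2) HE(4)]) (use mr nrpos in \<open>auto simp: field_simps\<close>)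
        have zeq: "z = ipt (-1) (-d) (-1)"
          unfolding vec3_eq z_def E2_def Y_def using nrpos nr rn dmr
          by (auto simp: field_simps)
        show False using bad[OF zH _ _ n2] zeq ipt_lattice by simp
      next
        case 2
        then have rn: "r2 = -n" using q2r n_def by simp
        define d where "d = (-r1) div n"
        define m where "m = (-r1) mod n"
        have dm: "d*n + m = -r1" unfolding d_def m_def by simp
        have m: "0 \<le> m" "m + 1 \<le> n" using npos by (simp_all add: m_def pos_mod_bound[of n "-r1"] add1_zle_eq)
        have mr: "real_of_int m + 1 \<le> real_of_int n" "0 \<le> real_of_int m" using m by linarith+
        have dmr: "real_of_int d * real_of_int n + real_of_int m = - real_of_int r1"
          using arg_cong[OF dm, of real_of_int] by simp
        define z where "z = (real_of_int m / real_of_int n) *\<^sub>R E1 + (1 / real_of_int n) *\<^sub>R Y"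
        have zH: "z \<in> H" unfolding z_def
          by (rule seg_point[OF Hc H0 HE(1) HE(4)]) (use mr nrpos in \<open>auto simp: field_simps\<close>)
        have zeq: "z = ipt (-d) (-1) (-1)"
          unfolding vec3_eq z_def E1_def Y_def using nrpos nr rn dmr
          by (auto simp: field_simps)
        show False using bad[OF zH _ _ n2] zeq ipt_lattice by simp
      qed
    qed
    then have k1: "k = 1" and l31: "l3 = 1" using kpos unfolding n_def by (simp_all add: pos_zmult_eq_1_iff)
    then have l11: "l1 = 1" "l2 = 1" using l1pos assms(2,3) by auto
    have id1': "l4 * (-r1) = p1 + 1" "l4 * (-r2) = p2 + 1" using id1 id2 l31 l11 by auto
    have pb: "p1 < l4" "p2 < l4" using p1b k1 by auto
    have l4le: "l4 \<le> 2"
    proof (rule ccontr)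
      assume "\<not> l4 \<le> 2"
      then have l43: "3 \<le> l4" by simp
      have wr: "3 \<le> real_of_int l4" using l43 by linarith
      define W where "W = (1/2::real) *\<^sub>R E1 + (1/2::real) *\<^sub>R E2"
      have WH: "W \<in> H" unfolding W_def by (rule seg_point[OF Hc H0 HE(1) HE(2)]) auto
      define z where "z = (2 / real_of_int l4) *\<^sub>R W + (1 / real_of_int l4) *\<^sub>R X"
      have zH: "z \<in> H" unfolding z_def
        by (rule seg_point[OF Hc H0 WH HE(3)]) (use wr in \<open>auto simp: field_simps\<close>)
      have i1: "real_of_int l4 * (- real_of_int r1) = real_of_int p1 + 1"
        using arg_cong[OF id1'(1), of real_of_int] by simp
      have i2: "real_of_int l4 * (- real_of_int r2) = real_of_int p2 + 1"
        using arg_cong[OF id1'(2), of real_of_int] by simp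
      have zeq: "z = ipt (-r1) (-r2) 1"
        unfolding vec3_eq z_def W_def E1_def E2_def X_def using wr i1 i2 k1
        by (auto simp: field_simps)
      have "z \<in> {E1,E2,X,Y,0}" using Hlat zH zeq ipt_lattice by blast
      then show False using zeq l43 k1 l31 unfolding E1_def E2_def X_def Y_def by (auto simp: ipt_eq_iff ipt_zero)
    qed
    have l4c: "l4 = 1 \<or> l4 = 2" using l4le l4pos by linarith
    have vals: "p1 = l4 - 1 \<and> p2 = l4 - 1 \<and> r1 = -1 \<and> r2 = -1"
      using l4c
    proof
      assume "l4 = 1" then show ?thesis using id1' pb p1b by auto
    next
      assume "l4 = 2" then show ?thesis using id1' pb p1b by presburger
    qed
    show ?thesis
      using l4c
    proof
      assume "l4 = 1"
      then have "H = convex hull {ipt 1 0 0, ipt 0 1 0, ipt 0 0 1, ipt (-1) (-1) (-1)}"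
        using vals k1 l31 unfolding H_def E1_def E2_def X_def Y_def by simp
      then show ?thesis using l31 gl_refl by simp
    next
      assume "l4 = 2"
      then have "H = convex hull {ipt 1 0 0, ipt 0 1 0, ipt 1 1 2, ipt (-1) (-1) (-1)}"
        using vals k1 l31 unfolding H_def E1_def E2_def X_def Y_def by simp
      then show ?thesis using l31 gl_refl by simp
    qed
  qed
  show ?thesis
    using ineqs eqcase
    unfolding H_def X_def Y_def E1_def E2_def p1_def p2_def r1_def r2_def q1_def q2_def
    by blast
qed


end
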